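(* Let $\{\ell_k\}_{k\in\mathbb{N}_0}$ be a sequence of nonnegative integers. Then the sequence $\{a^{\ell_k}\}_{k\in\mathbb{N}_0}$ is a positive sequence for every $a\in\mathbb{R}$ if and only if there exist $d\in\mathbb{N}_0$ and $\ell_0\in 2\mathbb{N}_0$ such that $\ell_k=kd+\ell_0$ for all $k\in\mathbb{N}_0$ (i.e. $\ell_0$ is even and $\{\ell_k\}$ is a nondecreasing arithmetic progression).
   Context: A sequence of real numbers $\{s_k\}_{k\in\mathbb{N}_0}$ is called positive if for every $n\in\mathbb{N}_0$ the Hankel matrix $(s_{i+j})_{i,j=0}^n$ is positive semidefinite. The convention $0^0=1$ is used. *)

theory Defs
  imports Main "HOL-Analysis.Analysis"
begin

definition hankel_psd :: "(nat \<Rightarrow> real) \<Rightarrow> nat \<Rightarrow> bool" where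
  "hankel_psd s n \<longleftrightarrow>
     (\<forall>c :: nat \<Rightarrow> real. (\<Sum>i\<le>n. \<Sum>j\<le>n. c i * c j * s (i + j)) \<ge> 0)"

definition positive_sequence :: "(nat \<Rightarrow> real) \<Rightarrow> bool" where
  "positive_sequence s \<longleftrightarrow> (\<forall>n. hankel_psd s n)"

end

theory Submission
  imports Defs
begin

lemma sum_two_point:
  fixes f :: "nat \<Rightarrow> real"
  assumes "i \<noteq> j" "i \<le> n" "j \<le> n"
  shows "(\<Sum>k\<le>n. (if k = i then x else if k = j then y else 0) * f k) = x * f i + y * f j"
proof -
  have "(\<Sum>k\<le>n. (if k = i then x else if k = j then y else 0) * f k)
      = (\<Sum>k\<le>n. (if k = i then x * f k else 0) + (if k = j then y * f k else 0))"
    using assms(1) by (intro sum.cong) auto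
  also have "\<dots> = x * f i + y * f j"
    using assms by (simp add: sum.distrib)
  finally show ?thesis .
qed

lemma psd_two:
  fixes s :: "nat \<Rightarrow> real"
  assumes "hankel_psd s n" "i \<noteq> j" "i \<le> n" "j \<le> n"
  shows "x^2 * s (2*i) + 2*x*y * s (i+j) + y^2 * s (2*j) \<ge> 0"
proof -
  define c where "c = (\<lambda>k. if k = i then x else if k = j then y else 0)"
  have "(\<Sum>a\<le>n. \<Sum>b\<le>n. c a * c b * s (a + b)) \<ge> 0"
    using assms(1) unfolding hankel_psd_def by blast
  also have "(\<Sum>a\<le>n. \<Sum>b\<le>n. c a * c b * s (a + b))
      = (\<Sum>a\<le>n. c a * (x * s (a + i) + y * s (a + j)))"
  proof (intro sum.cong refl)
    fix a assume "a \<in> {..n}"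
    have "(\<Sum>b\<le>n. c a * c b * s (a + b)) = c a * (\<Sum>b\<le>n. c b * s (a + b))"
      by (simp add: sum_distrib_left mult.assoc)
    also have "(\<Sum>b\<le>n. c b * s (a + b)) = x * s (a + i) + y * s (a + j)"
      unfolding c_def using sum_two_point[OF assms(2-4), of x y "\<lambda>b. s (a + b)"] by simp
    finally show "(\<Sum>b\<le>n. c a * c b * s (a + b)) = c a * (x * s (a + i) + y * s (a + j))" .
  qed
  also have "\<dots> = x * (x * s (i + i) + y * s (i + j)) + y * (x * s (j + i) + y * s (j + j))"
    unfolding c_def using sum_two_point[OF assms(2-4), of x y "\<lambda>a. x * s (a + i) + y * s (a + j)"] by simp
  also have "\<dots> = x^2 * s (2*i) + 2*x*y * s (i+j) + y^2 * s (2*j)"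
  proof -
    have e: "i + i = 2*i" "j + j = 2*j" "j + i = i + j" by simp_all
    show ?thesis unfolding e by (simp add: power2_eq_square algebra_simps)
  qed
  finally show ?thesis .
qed

lemma psd_minor:
  fixes s :: "nat \<Rightarrow> real"
  assumes "hankel_psd s n" "i \<noteq> j" "i \<le> n" "j \<le> n" "s (2*i) > 0"
  shows "s (i+j)^2 \<le> s (2*i) * s (2*j)"
proof -
  have "s (i+j)^2 * s (2*i) + 2 * s (i+j)*(- s (2*i)) * s (i+j) + (- s (2*i))^2 * s (2*j) \<ge> 0"
    using psd_two[OF assms(1-4), of "s (i+j)" "- s (2*i)"] by simp
  hence "s (2*i) * (s (2*i) * s (2*j) - s (i+j)^2) \<ge> 0"
    by (simp add: power2_eq_square algebra_simps)
  with assms(5) show ?thesis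
    by (simp add: zero_le_mult_iff)
qed

lemma key_eq:
  fixes l :: "nat \<Rightarrow> nat"
  assumes H: "\<forall>a :: real. positive_sequence (\<lambda>k. a ^ l k)" and ij: "i \<noteq> j"
  shows "l (2*i) + l (2*j) = 2 * l (i+j)"
proof -
  let ?n = "max i j"
  have A: "(a ^ l (i+j))^2 \<le> a ^ l (2*i) * a ^ l (2*j)" if "a > 0" for a :: real
    using psd_minor[of "\<lambda>k. a ^ l k" ?n i j] H that ij
    unfolding positive_sequence_def by auto
  have pw: "(a ^ l (i+j))^2 = a ^ (2 * l (i+j))" "a ^ l (2*i) * a ^ l (2*j) = a ^ (l (2*i) + l (2*j))" for a :: real
    by (simp_all only: power_add power_mult mult.commute[of 2])
  have "(2::real) ^ (2 * l (i+j)) \<le> 2 ^ (l (2*i) + l (2*j))"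
    using A[of 2] unfolding pw by simp
  hence 1: "2 * l (i+j) \<le> l (2*i) + l (2*j)" by simp
  have "(1/2::real) ^ (2 * l (i+j)) \<le> (1/2) ^ (l (2*i) + l (2*j))"
    using A[of "1/2"] unfolding pw by simp
  hence 2: "l (2*i) + l (2*j) \<le> 2 * l (i+j)"
    by (simp add: power_decreasing_iff)
  from 1 2 show ?thesis by linarith
qed

theorem mainTheorem3:
  fixes l :: "nat \<Rightarrow> nat"
  shows "(\<forall>a :: real. positive_sequence (\<lambda>k. a ^ l k)) \<longleftrightarrow>
         (\<exists>d :: nat. even (l 0) \<and> (\<forall>k. l k = k * d + l 0))"
proof
  assume H: "\<forall>a :: real. positive_sequence (\<lambda>k. a ^ l k)"
  have "hankel_psd (\<lambda>k. (-1::real) ^ l k) 0" using H unfolding positive_sequence_def by blast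
  hence "(1::real) * 1 * (-1) ^ l 0 \<ge> 0" unfolding hankel_psd_def
    by (auto dest: spec[of _ "\<lambda>_. 1"])
  hence ev: "even (l 0)"
    by (cases "even (l 0)") auto
  define d :: int where "d = int (l 1) - int (l 0)"
  have E0: "l (2*p) + l 0 = 2 * l p" if "p \<ge> 1" for p
    using key_eq[OF H, of p 0] that by simp
  have lin: "int (l m) = int (l 0) + int m * d" for m
  proof (induction m rule: less_induct)
    case (less m)
    show ?case
    proof (cases "m \<le> 1")
      case True
      then show ?thesis unfolding d_def by (cases m) auto
    next
      case False
      show ?thesis
      proof (cases "even m")
        case True
        then obtain p where p: "m = 2*p" by blast
        with False have "p \<ge> 1" "p < m" by auto
        hence h1: "int (l (2*p)) + int (l 0) = 2 * int (l p)" using E0[of p]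
          by (metis of_nat_add of_nat_mult of_nat_numeral)
        have h2: "int (l p) = int (l 0) + int p * d" using less[of p] \<open>p < m\<close> by blast
        have h3: "int m * d = 2 * (int p * d)" unfolding p by simp
        show ?thesis using h1 h2 h3 unfolding p by linarith
      next
        case False2: False
        then obtain p where p: "m = 2*p+1" using oddE by blast
        with False have p1: "p \<ge> 1" "p < m" "p + 1 < m" "2*p < m" by auto
        have "l (2*p) + l (2*(p+1)) = 2 * l (p + (p+1))"
          using key_eq[OF H, of p "p+1"] by simp
        moreover have "p + (p+1) = m" using p by simp
        ultimately have "l (2*p) + l (2*(p+1)) = 2 * l m" by simp
        moreover have "l (2*(p+1)) + l 0 = 2 * l (p+1)" using E0[of "p+1"] by simp
        ultimately have A: "int (l (2*p)) + int (l (2*(p+1))) = 2 * int (l m)"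
          and B: "int (l (2*(p+1))) + int (l 0) = 2 * int (l (p+1))"
          by (metis of_nat_add of_nat_mult of_nat_numeral)+
        have C: "int (l (2*p)) = int (l 0) + int (2*p) * d" using less[of "2*p"] p1 by blast
        have D: "int (l (p+1)) = int (l 0) + int (p+1) * d" using less[of "p+1"] p1 by blast
        have E: "int (2*p) * d = 2 * (int p * d)" "int (p+1) * d = int p * d + d"
          "int m * d = 2 * (int p * d) + d" unfolding p by (simp_all add: algebra_simps)
        show ?thesis using A B C D E by linarith
      qed
    qed
  qed
  have "d \<ge> 0"
  proof (rule ccontr)
    assume "\<not> d \<ge> 0"
    hence "d \<le> -1" by simp
    hence "int (l 0 + 1) * d \<le> - int (l 0 + 1)"
      by (metis mult.commute mult_minus1 mult_right_mono of_nat_0_le_iff mult_le_cancel_left1)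
    hence "int (l (l 0 + 1)) < 0" using lin[of "l 0 + 1"] by simp
    thus False by simp
  qed
  then obtain dn :: nat where dn: "d = int dn" using nonneg_int_cases by blast
  have "\<forall>k. l k = k * dn + l 0"
  proof
    fix k
    have "int (l k) = int (k * dn + l 0)" using lin[of k] dn by simp
    thus "l k = k * dn + l 0" by (simp only: of_nat_eq_iff)
  qed
  with ev show "\<exists>d :: nat. even (l 0) \<and> (\<forall>k. l k = k * d + l 0)" by blast
next
  assume "\<exists>d :: nat. even (l 0) \<and> (\<forall>k. l k = k * d + l 0)"
  then obtain d where ev: "even (l 0)" and L: "\<forall>k. l k = k * d + l 0" by blast
  show "\<forall>a :: real. positive_sequence (\<lambda>k. a ^ l k)"
    unfolding positive_sequence_def hankel_psd_def
  proof (intro allI)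
    fix a :: real and n :: nat and c :: "nat \<Rightarrow> real"
    have "(\<Sum>i\<le>n. \<Sum>j\<le>n. c i * c j * a ^ l (i + j))
        = (\<Sum>i\<le>n. \<Sum>j\<le>n. a ^ l 0 * ((c i * a ^ (i*d)) * (c j * a ^ (j*d))))"
    proof (intro sum.cong refl)
      fix i j
      have "a ^ l (i + j) = a ^ (l 0 + i*d + j*d)" unfolding L[rule_format, of "i+j"] by (simp add: add_mult_distrib add.commute add.left_commute)
      also have "\<dots> = a ^ l 0 * a ^ (i*d) * a ^ (j*d)" by (simp only: power_add)
      finally show "c i * c j * a ^ l (i + j) = a ^ l 0 * ((c i * a ^ (i*d)) * (c j * a ^ (j*d)))"
        by (simp only: mult_ac)
    qed
    also have "\<dots> = a ^ l 0 * ((\<Sum>i\<le>n. c i * a ^ (i*d)) * (\<Sum>j\<le>n. c j * a ^ (j*d)))"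
      unfolding sum_product by (simp only: sum_distrib_left)
    also have "\<dots> \<ge> 0" using ev by (simp add: zero_le_even_power)
    finally show "(\<Sum>i\<le>n. \<Sum>j\<le>n. c i * c j * a ^ l (i + j)) \<ge> 0" .
  qed
qed

end
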